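(* For $n\ge 1$, the number $t_n(321)$ of shallow $321$-avoiding permutations in $S_n$ equals $F_{2n-1}$.
   Context: For $\pi\in S_n$: $D(\pi)=\sum_{i}|\pi_i-i|$, $I(\pi)$ is the number of inversions, $T(\pi)=n-\mathrm{cyc}(\pi)$ with $\mathrm{cyc}$ the number of cycles in the disjoint cycle decomposition; $\pi$ is shallow if $I(\pi)+T(\pi)=D(\pi)$. A permutation avoids a pattern $\sigma$ if it has no subsequence order-isomorphic to $\sigma$. $F_m$ are the Fibonacci numbers with $F_1=F_2=1$. *)

theory Defs
  imports "HOL-Combinatorics.Combinatorics" "HOL-Number_Theory.Fib"
begin

text \<open>Permutations in S_n are modelled as functions p :: nat => nat with
  p permutes {1..n}, so pi_i = p i for i in {1..n}.\<close>

definition total_displacement :: "nat \<Rightarrow> (nat \<Rightarrow> nat) \<Rightarrow> int" where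
  "total_displacement n p = (\<Sum>i\<in>{1..n}. \<bar>int (p i) - int i\<bar>)"

definition inversions :: "nat \<Rightarrow> (nat \<Rightarrow> nat) \<Rightarrow> nat" where
  "inversions n p = card {(i, j). i \<in> {1..n} \<and> j \<in> {1..n} \<and> i < j \<and> p i > p j}"

text \<open>Number of cycles in the disjoint cycle decomposition (fixed points count as cycles):
  the number of distinct orbits of elements of {1..n}.\<close>
definition num_cycles :: "nat \<Rightarrow> (nat \<Rightarrow> nat) \<Rightarrow> nat" where
  "num_cycles n p = card (orbit p ` {1..n})"

definition reflection_length :: "nat \<Rightarrow> (nat \<Rightarrow> nat) \<Rightarrow> nat" where
  "reflection_length n p = n - num_cycles n p"

definition shallow :: "nat \<Rightarrow> (nat \<Rightarrow> nat) \<Rightarrow> bool" where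
  "shallow n p \<longleftrightarrow>
     int (inversions n p) + int (reflection_length n p) = total_displacement n p"

definition avoids_321 :: "nat \<Rightarrow> (nat \<Rightarrow> nat) \<Rightarrow> bool" where
  "avoids_321 n p \<longleftrightarrow>
     \<not> (\<exists>i j k. 1 \<le> i \<and> i < j \<and> j < k \<and> k \<le> n \<and> p i > p j \<and> p j > p k)"

end

theory Submission
  imports Defs
begin


lemma card_filter_sum: "finite A \<Longrightarrow> card {x\<in>A. P x} = (\<Sum>x\<in>A. if P x then 1 else (0::nat))"
  by (simp add: sum.If_cases Int_def)

lemma perm_restrict:
  "(p permutes {1..Suc k} \<and> p (Suc k) = Suc k) \<longleftrightarrow> p permutes {1..k}"
proof
  assume h: "p permutes {1..Suc k} \<and> p (Suc k) = Suc k"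
  show "p permutes {1..k}"
  proof (rule permutes_superset[OF conjunct1[OF h]])
    fix x assume "x \<in> {1..Suc k} - {1..k}" then have "x = Suc k" by auto then show "p x = x" using h by simp
  qed
next
  assume a: "p permutes {1..k}"
  show "p permutes {1..Suc k} \<and> p (Suc k) = Suc k"
    using permutes_subset[OF a, of "{1..Suc k}"] permutes_not_in[OF a, of "Suc k"] by auto
qed

lemma inv_restrict:
  assumes "p permutes {1..k}"
  shows "inversions (Suc k) p = inversions k p"
proof -
  have pk: "p (Suc k) = Suc k" using permutes_not_in[OF assms] by auto
  have img: "i \<in> {1..k} \<Longrightarrow> p i \<in> {1..k}" for i using permutes_in_image[OF assms] by auto
  have "{(i, j). i \<in> {1..Suc k} \<and> j \<in> {1..Suc k} \<and> i < j \<and> p i > p j}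
      = {(i, j). i \<in> {1..k} \<and> j \<in> {1..k} \<and> i < j \<and> p i > p j}"
  proof (safe)
    fix i j assume h: "i \<in> {1..Suc k}" "j \<in> {1..Suc k}" "i < j" "p j < p i"
    then have "j \<noteq> Suc k" using pk img[of i] by (cases "i = Suc k") auto
    then show "i \<in> {1..k}" "j \<in> {1..k}" using h by auto
  qed auto
  then show ?thesis unfolding inversions_def by simp
qed

lemma orbit_same:
  assumes "permutation p" "x \<in> orbit p y"
  shows "orbit p x = orbit p y"
proof
  show "orbit p x \<subseteq> orbit p y" using orbit_trans[OF _ assms(2)] by blast
  have "y \<in> orbit p x" using orbit_swap[OF permutation_self_in_orbit[OF assms(1)] assms(2)] .
  then show "orbit p y \<subseteq> orbit p x" using orbit_trans[of _ p y x] by blast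
qed

lemma perm_of_permutes: "(p::nat\<Rightarrow>nat) permutes {1..n} \<Longrightarrow> permutation p"
  by (erule permutes_imp_permutation[rotated]) simp

lemma orbit_fixed: "p x = x \<Longrightarrow> orbit p x = {x}"
proof -
  assume h: "p x = x"
  have "y \<in> orbit p x \<Longrightarrow> y = x" for y by (induct rule: orbit.induct) (auto simp: h)
  moreover have "x \<in> orbit p x" using orbit.base[of p x] h by simp
  ultimately show ?thesis by auto
qed

lemma cyc_restrict:
  assumes "p permutes {1..k}"
  shows "num_cycles (Suc k) p = Suc (num_cycles k p)"
proof -
  have pk: "p (Suc k) = Suc k" using permutes_not_in[OF assms] by auto
  have pp: "permutation p" using perm_of_permutes[OF assms] .
  have "orbit p ` {1..Suc k} = insert (orbit p (Suc k)) (orbit p ` {1..k})"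
    by (auto simp: atLeastAtMostSuc_conv)
  moreover have "orbit p (Suc k) \<notin> orbit p ` {1..k}"
  proof
    assume "orbit p (Suc k) \<in> orbit p ` {1..k}"
    then obtain x where "x \<in> {1..k}" "orbit p (Suc k) = orbit p x" by auto
    then have "orbit p x = {Suc k}" using orbit_fixed[of p "Suc k", OF pk] by simp
    then show False using permutation_self_in_orbit[OF pp, of x] \<open>x \<in> {1..k}\<close> by auto
  qed
  ultimately show ?thesis unfolding num_cycles_def by simp
qed



lemma del_perm:
  assumes p: "p permutes {1..Suc k}" and m: "m \<in> {1..k}" and pm: "p m = Suc k"
  shows "p(m := p (Suc k), Suc k := Suc k) permutes {1..k}"
proof -
  let ?a = "Suc k"
  have ip: "inj p" using permutes_inj[OF p] .
  have eq: "p(m := p ?a, ?a := ?a) = transpose ?a (p ?a) \<circ> p"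
  proof
    fix x
    show "(p(m := p ?a, ?a := ?a)) x = (transpose ?a (p ?a) \<circ> p) x"
    proof (cases "x = m")
      case True then show ?thesis using m pm by (auto simp: transpose_def)
    next
      case False
      show ?thesis
      proof (cases "x = ?a")
        case True then show ?thesis by (auto simp: transpose_def)
      next
        case xa: False
        have "p x \<noteq> ?a" using False pm inj_eq[OF ip, of x m] by auto
        moreover have "p x \<noteq> p ?a" using xa inj_eq[OF ip, of x ?a] by auto
        ultimately show ?thesis using False xa by (auto simp: transpose_def)
      qed
    qed
  qed
  have "insert ?a {1..k} = {1..?a}" by auto
  then have "transpose ?a (p ?a) \<circ> p permutes {1..k}"
    using permutes_insert_lemma[of p ?a "{1..k}"] p by simp
  then show ?thesis using eq by simp
qed

lemma ins_perm:
  assumes q: "q permutes {1..k}" and m: "m \<in> {1..k}"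
  shows "q(m := Suc k, Suc k := q m) permutes {1..Suc k}"
proof -
  let ?a = "Suc k"
  have ip: "inj q" using permutes_inj[OF q] .
  have qa: "q ?a = ?a" using permutes_not_in[OF q] by auto
  have qm: "q m \<in> {1..k}" using permutes_in_image[OF q] m by auto
  have eq: "q(m := ?a, ?a := q m) = transpose ?a (q m) \<circ> q"
  proof
    fix x
    show "(q(m := ?a, ?a := q m)) x = (transpose ?a (q m) \<circ> q) x"
    proof (cases "x = m")
      case True then show ?thesis using m by (auto simp: transpose_def)
    next
      case False
      show ?thesis
      proof (cases "x = ?a")
        case True then show ?thesis using qa qm by (auto simp: transpose_def)
      next
        case xa: False
        have "q x \<noteq> ?a" using xa qa inj_eq[OF ip, of x ?a] by auto
        moreover have "q x \<noteq> q m" using False inj_eq[OF ip, of x m] by auto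
        ultimately show ?thesis using False xa by (auto simp: transpose_def)
      qed
    qed
  qed
  have "q permutes {1..?a}" using permutes_subset[OF q, of "{1..?a}"] by auto
  moreover have "transpose ?a (q m) permutes {1..?a}" using qm by (intro permutes_swap_id) auto
  ultimately have "transpose ?a (q m) \<circ> q permutes {1..?a}" by (rule permutes_compose)
  then show ?thesis using eq by simp
qed

lemma del_orbit:
  assumes p: "p permutes {1..Suc k}" and m: "m \<in> {1..k}" and pm: "p m = Suc k"
    and x: "x \<in> {1..k}"
  shows "orbit (p(m := p (Suc k), Suc k := Suc k)) x = orbit p x - {Suc k}"
proof -
  let ?a = "Suc k"
  define q where "q = p(m := p ?a, ?a := ?a)"
  have ip: "inj p" using permutes_inj[OF p] .
  have ma: "m \<noteq> ?a" using m by auto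
  have xa: "x \<noteq> ?a" using x by auto
  have pa: "p ?a \<noteq> ?a" using pm ma inj_eq[OF ip, of ?a m] by auto
  have qz: "z \<noteq> ?a \<Longrightarrow> q z = (if z = m then p (p z) else p z) \<and> q z \<noteq> ?a" for z
  proof -
    assume za: "z \<noteq> ?a"
    show ?thesis
    proof (cases "z = m")
      case True then show ?thesis using pm pa za by (simp add: q_def)
    next
      case False
      then have "p z \<noteq> ?a" using pm inj_eq[OF ip, of z m] by auto
      then show ?thesis using False za by (simp add: q_def)
    qed
  qed
  have A: "y \<in> orbit p x \<and> y \<noteq> ?a" if "y \<in> orbit q x" for y
    using that
  proof (induct rule: orbit.induct)
    case base
    show ?case
    proof (cases "x = m")
      case True
      then have "q x = p (p x)" using qz[OF xa] by simp
      moreover have "p (p x) \<in> orbit p x" by (intro orbit.step orbit.base)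
      ultimately show ?thesis using qz[OF xa] by simp
    next
      case False
      then show ?thesis using qz[OF xa] orbit.base[of p x] by simp
    qed
  next
    case (step y)
    then have ya: "y \<noteq> ?a" and yo: "y \<in> orbit p x" by auto
    show ?case
    proof (cases "y = m")
      case True
      then have "q y = p (p y)" using qz[OF ya] by simp
      moreover have "p (p y) \<in> orbit p x" using yo by (intro orbit.step)
      ultimately show ?thesis using qz[OF ya] by simp
    next
      case False
      then show ?thesis using qz[OF ya] orbit.step[OF yo] by simp
    qed
  qed
  have B: "(y \<noteq> ?a \<longrightarrow> y \<in> orbit q x) \<and> (y = ?a \<longrightarrow> (x = m \<or> m \<in> orbit q x))"
    if "y \<in> orbit p x" for y
    using that
  proof (induct rule: orbit.induct)
    case base
    show ?case
    proof (cases "p x = ?a")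
      case True
      then have "x = m" using pm inj_eq[OF ip, of x m] by auto
      then show ?thesis using True by simp
    next
      case False
      then have "x \<noteq> m" using pm by auto
      then have "q x = p x" using qz[OF xa] by simp
      then show ?thesis using False orbit.base[of q x] by simp
    qed
  next
    case (step y)
    show ?case
    proof (cases "p y = ?a")
      case True
      then have ym: "y = m" using pm inj_eq[OF ip, of y m] by auto
      then have "y \<in> orbit q x" using step ma by simp
      then show ?thesis using True ym by simp
    next
      case False
      show ?thesis
      proof (cases "y = ?a")
        case True
        then have "p y = q m" using ma by (simp add: q_def)
        moreover have "q m \<in> orbit q x"
          using step True orbit.base[of q x] orbit.step[of m q x] by auto
        ultimately show ?thesis using False by simp
      next
        case ya: False
        then have yo: "y \<in> orbit q x" using step by simp
        have "y \<noteq> m" using False pm by auto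
        then have "q y = p y" using qz[OF ya] by simp
        then show ?thesis using False orbit.step[OF yo] by simp
      qed
    qed
  qed
  show ?thesis unfolding q_def[symmetric] using A B by blast
qed

lemma del_cyc:
  assumes p: "p permutes {1..Suc k}" and m: "m \<in> {1..k}" and pm: "p m = Suc k"
  shows "num_cycles k (p(m := p (Suc k), Suc k := Suc k)) = num_cycles (Suc k) p"
proof -
  let ?a = "Suc k"
  define q where "q = p(m := p ?a, ?a := ?a)"
  have pp: "permutation p" using perm_of_permutes[OF p] .
  have "orbit p ?a = orbit p m" using permutation_orbit_step[OF pp, of m] pm by simp
  then have e1: "orbit p ` {1..?a} = orbit p ` {1..k}" using m by (auto simp: atLeastAtMostSuc_conv)
  have e2: "orbit q ` {1..k} = (\<lambda>X. X - {?a}) ` (orbit p ` {1..k})"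
    using del_orbit[OF p m pm] unfolding q_def[symmetric] by (simp add: image_image)
  have inj: "inj_on (\<lambda>X. X - {?a}) (orbit p ` {1..k})"
  proof (rule inj_onI)
    fix O1 O2 assume "O1 \<in> orbit p ` {1..k}" "O2 \<in> orbit p ` {1..k}" and e: "O1 - {?a} = O2 - {?a}"
    then obtain x y where x: "x \<in> {1..k}" "O1 = orbit p x" and y: "y \<in> {1..k}" "O2 = orbit p y" by auto
    have "x \<in> O1 - {?a}" using x permutation_self_in_orbit[OF pp, of x] by auto
    then have "x \<in> orbit p y" using e y by auto
    then show "O1 = O2" using orbit_same[OF pp] x y by simp
  qed
  show ?thesis unfolding num_cycles_def q_def[symmetric] e1 e2 card_image[OF inj] ..
qed



lemma inv_sum:
  "inversions n p = (\<Sum>i\<in>{1..n}. \<Sum>j\<in>{1..n}. if i < j \<and> p j < p i then 1 else (0::nat))"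
proof -
  have e: "{(i, j). i \<in> {1..n} \<and> j \<in> {1..n} \<and> i < j \<and> p i > p j}
      = (SIGMA i:{1..n}. {j\<in>{1..n}. i < j \<and> p j < p i})" by (auto simp del: atLeastAtMost_iff)
  have "inversions n p = card (SIGMA i:{1..n}. {j\<in>{1..n}. i < j \<and> p j < p i})"
    unfolding inversions_def e ..
  also have "\<dots> = (\<Sum>i\<in>{1..n}. card {j\<in>{1..n}. i < j \<and> p j < p i})"
    by (rule card_SigmaI) auto
  also have "\<dots> = (\<Sum>i\<in>{1..n}. \<Sum>j\<in>{1..n}. if i < j \<and> p j < p i then 1 else (0::nat))"
    by (rule sum.cong[OF refl], rule card_filter_sum) simp
  finally show ?thesis .
qed

definition ind :: "bool \<Rightarrow> nat" where "ind b = (if b then 1 else 0)"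

lemma del_inv:
  assumes p: "p permutes {1..Suc k}" and m: "m \<in> {1..k}" and pm: "p m = Suc k"
  shows "inversions (Suc k) p = inversions k (p(m := p (Suc k), Suc k := Suc k)) + 1
           + 2 * card {j. m < j \<and> j < Suc k \<and> p (Suc k) < p j}"
proof -
  let ?a = "Suc k"
  define q where "q = p(m := p ?a, ?a := ?a)"
  define v where "v = p ?a"
  define Q where "Q = {1..k} - {m}"
  define f where "f = (\<lambda>(r::nat\<Rightarrow>nat) (i::nat) (j::nat). if i < j \<and> r j < (r i::nat) then 1 else (0::nat))"
  have ip: "inj p" using permutes_inj[OF p] .
  have ma: "m \<noteq> ?a" using m by auto
  have fQ: "finite Q" by (simp add: Q_def)
  have mQ: "m \<notin> Q" and aQ: "?a \<notin> insert m Q" using ma by (auto simp: Q_def)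
  have B: "{1..k} = insert m Q" using m by (auto simp: Q_def)
  have A: "{1..?a} = insert ?a (insert m Q)" using B by (auto simp: atLeastAtMostSuc_conv)
  have va: "v < ?a"
  proof -
    have "v \<in> {1..?a}" using permutes_in_image[OF p] by (simp add: v_def)
    moreover have "v \<noteq> ?a" using pm ma inj_eq[OF ip, of ?a m] by (auto simp: v_def)
    ultimately show ?thesis by auto
  qed
  have Qi: "i \<in> Q \<Longrightarrow> i < ?a \<and> i \<noteq> m \<and> q i = p i \<and> p i < ?a \<and> p i \<noteq> v" for i
  proof -
    assume i: "i \<in> Q"
    then have i1: "i < ?a" "i \<noteq> m" "i \<noteq> ?a" "i \<in> {1..?a}" by (auto simp: Q_def)
    have "p i \<in> {1..?a}" using permutes_in_image[OF p] i1(4) by simp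
    moreover have "p i \<noteq> ?a" using pm i1 inj_eq[OF ip, of i m] by auto
    moreover have "p i \<noteq> v" using i1 inj_eq[OF ip, of i ?a] by (auto simp: v_def)
    ultimately show ?thesis using i1 by (auto simp: q_def)
  qed
  have qm: "q m = v" and qa: "q ?a = ?a" using ma by (auto simp: q_def v_def)
  have Ip: "inversions ?a p = (\<Sum>i\<in>insert ?a (insert m Q). \<Sum>j\<in>insert ?a (insert m Q). f p i j)"
    unfolding inv_sum A f_def ..
  have rowa: "(\<Sum>j\<in>insert ?a (insert m Q). f p ?a j) = 0"
  proof (rule sum.neutral, rule ballI)
    fix j assume "j \<in> insert ?a (insert m Q)"
    then have "j \<le> ?a" using m Qi[of j] by auto
    then show "f p ?a j = 0" by (simp add: f_def)
  qed
  have rowm: "(\<Sum>j\<in>insert ?a (insert m Q). f p m j) = 1 + (\<Sum>j\<in>Q. ind (m < j))"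
  proof -
    have "(\<Sum>j\<in>insert ?a (insert m Q). f p m j) = f p m ?a + (f p m m + (\<Sum>j\<in>Q. f p m j))"
      using fQ mQ aQ by simp
    also have "f p m ?a = 1" using m va pm by (auto simp: f_def v_def)
    also have "f p m m = 0" by (simp add: f_def)
    also have "(\<Sum>j\<in>Q. f p m j) = (\<Sum>j\<in>Q. ind (m < j))"
      by (rule sum.cong) (use Qi pm in \<open>auto simp: f_def ind_def\<close>)
    finally show ?thesis by simp
  qed
  have rowi: "i \<in> Q \<Longrightarrow> (\<Sum>j\<in>insert ?a (insert m Q). f p i j) = ind (v < p i) + (\<Sum>j\<in>Q. f p i j)" for i
  proof -
    assume i: "i \<in> Q"
    have "(\<Sum>j\<in>insert ?a (insert m Q). f p i j) = f p i ?a + (f p i m + (\<Sum>j\<in>Q. f p i j))"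
      using fQ mQ aQ by simp
    also have "f p i ?a = ind (v < p i)" using Qi[OF i] by (auto simp: f_def ind_def v_def)
    also have "f p i m = 0" using Qi[OF i] pm by (auto simp: f_def)
    finally show ?thesis by simp
  qed
  have Ip2: "inversions ?a p = 1 + (\<Sum>i\<in>Q. ind (m < i) + ind (v < p i) + (\<Sum>j\<in>Q. f p i j))"
  proof -
    have "inversions ?a p = (\<Sum>j\<in>insert ?a (insert m Q). f p ?a j) + ((\<Sum>j\<in>insert ?a (insert m Q). f p m j)
        + (\<Sum>i\<in>Q. \<Sum>j\<in>insert ?a (insert m Q). f p i j))"
      unfolding Ip using fQ mQ aQ by simp
    also have "(\<Sum>i\<in>Q. \<Sum>j\<in>insert ?a (insert m Q). f p i j) = (\<Sum>i\<in>Q. ind (v < p i) + (\<Sum>j\<in>Q. f p i j))"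
      by (rule sum.cong) (simp_all add: rowi)
    finally show ?thesis unfolding rowa rowm by (simp add: sum.distrib add.assoc)
  qed
  have Iq: "inversions k q = (\<Sum>i\<in>insert m Q. \<Sum>j\<in>insert m Q. f q i j)"
    unfolding inv_sum B f_def ..
  have qrowm: "(\<Sum>j\<in>insert m Q. f q m j) = (\<Sum>j\<in>Q. ind (m < j \<and> p j < v))"
  proof -
    have "(\<Sum>j\<in>insert m Q. f q m j) = f q m m + (\<Sum>j\<in>Q. f q m j)"
      using fQ mQ by simp
    also have "(\<Sum>j\<in>Q. f q m j) = (\<Sum>j\<in>Q. ind (m < j \<and> p j < v))"
      by (rule sum.cong) (use Qi qm in \<open>auto simp: f_def ind_def\<close>)
    finally show ?thesis by (simp add: f_def)
  qed
  have qrowi: "i \<in> Q \<Longrightarrow> (\<Sum>j\<in>insert m Q. f q i j) = ind (i < m \<and> v < p i) + (\<Sum>j\<in>Q. f p i j)" for i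
  proof -
    assume i: "i \<in> Q"
    have "(\<Sum>j\<in>insert m Q. f q i j) = f q i m + (\<Sum>j\<in>Q. f q i j)"
      using fQ mQ by simp
    also have "f q i m = ind (i < m \<and> v < p i)" using Qi[OF i] qm by (auto simp: f_def ind_def)
    also have "(\<Sum>j\<in>Q. f q i j) = (\<Sum>j\<in>Q. f p i j)"
      by (rule sum.cong) (use Qi i in \<open>auto simp: f_def\<close>)
    finally show ?thesis .
  qed
  have Iq2: "inversions k q = (\<Sum>i\<in>Q. ind (m < i \<and> p i < v) + ind (i < m \<and> v < p i) + (\<Sum>j\<in>Q. f p i j))"
  proof -
    have "inversions k q = (\<Sum>j\<in>insert m Q. f q m j) + (\<Sum>i\<in>Q. \<Sum>j\<in>insert m Q. f q i j)"
      unfolding Iq using fQ mQ by simp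
    also have "(\<Sum>i\<in>Q. \<Sum>j\<in>insert m Q. f q i j) = (\<Sum>i\<in>Q. ind (i < m \<and> v < p i) + (\<Sum>j\<in>Q. f p i j))"
      by (rule sum.cong) (simp_all add: qrowi)
    finally show ?thesis unfolding qrowm by (simp add: sum.distrib add.assoc)
  qed
  have G: "card {j. m < j \<and> j < Suc k \<and> p (Suc k) < p j} = (\<Sum>i\<in>Q. ind (m < i \<and> v < p i))"
  proof -
    have "{j. m < j \<and> j < Suc k \<and> p (Suc k) < p j} = {i\<in>Q. m < i \<and> v < p i}"
      using m by (auto simp: Q_def v_def)
    then show ?thesis using card_filter_sum[OF fQ, of "\<lambda>i. m < i \<and> v < p i"] by (simp add: ind_def)
  qed
  have pw: "i \<in> Q \<Longrightarrow> ind (m < i) + ind (v < p i) + (\<Sum>j\<in>Q. f p i j)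
      = (ind (m < i \<and> p i < v) + ind (i < m \<and> v < p i) + (\<Sum>j\<in>Q. f p i j)) + 2 * ind (m < i \<and> v < p i)" for i
    using Qi[of i] by (cases "m < i"; cases "v < p i") (auto simp: ind_def)
  have "inversions ?a p = 1 + (\<Sum>i\<in>Q. (ind (m < i \<and> p i < v) + ind (i < m \<and> v < p i) + (\<Sum>j\<in>Q. f p i j)) + 2 * ind (m < i \<and> v < p i))"
    unfolding Ip2 by (rule arg_cong[where f="\<lambda>x. 1 + x"], rule sum.cong[OF refl], rule pw)
  also have "\<dots> = 1 + inversions k q + 2 * (\<Sum>i\<in>Q. ind (m < i \<and> v < p i))"
    unfolding Iq2 by (simp add: sum.distrib sum_distrib_left)
  finally show ?thesis unfolding G q_def by simp
qed



definition E :: "nat \<Rightarrow> (nat \<Rightarrow> nat) set" where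
  "E n = {p. p permutes {1..n} \<and> inversions n p + num_cycles n p = n}"

lemma get_m:
  assumes p: "p permutes {1..Suc k}" and pk: "p (Suc k) \<noteq> Suc k"
  obtains m where "m \<in> {1..k}" "p m = Suc k"
proof -
  define m where "m = inv p (Suc k)"
  have pm: "p m = Suc k" unfolding m_def using permutes_inverses(1)[OF p] by simp
  have "m \<in> {1..Suc k}" unfolding m_def using permutes_in_image[OF permutes_inv[OF p]] by simp
  moreover have "m \<noteq> Suc k" using pm pk by auto
  ultimately have "m \<in> {1..k}" by auto
  then show ?thesis using pm that by blast
qed

lemma inv_cyc_ge: "p permutes {1..n} \<Longrightarrow> n \<le> inversions n p + num_cycles n p"
proof (induction n arbitrary: p)
  case 0 then show ?case by simp
next
  case (Suc k)
  show ?case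
  proof (cases "p (Suc k) = Suc k")
    case True
    then have pk: "p permutes {1..k}" using perm_restrict Suc.prems by blast
    show ?thesis using Suc.IH[OF pk] inv_restrict[OF pk] cyc_restrict[OF pk] by simp
  next
    case False
    obtain m where m: "m \<in> {1..k}" "p m = Suc k" using get_m[OF Suc.prems False] .
    define q where "q = p(m := p (Suc k), Suc k := Suc k)"
    have q: "q permutes {1..k}" unfolding q_def using del_perm[OF Suc.prems m] .
    have h1: "k \<le> inversions k q + num_cycles k q" using Suc.IH[OF q] .
    have h2: "inversions (Suc k) p = inversions k q + 1 + 2 * card {j. m < j \<and> j < Suc k \<and> p (Suc k) < p j}"
      unfolding q_def using del_inv[OF Suc.prems m] .
    have h3: "num_cycles k q = num_cycles (Suc k) p" unfolding q_def using del_cyc[OF Suc.prems m] .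
    show ?thesis using h1 h2 h3 by linarith
  qed
qed

lemma del_E:
  assumes p: "p permutes {1..Suc k}" and m: "m \<in> {1..k}" and pm: "p m = Suc k"
  shows "p \<in> E (Suc k) \<longleftrightarrow> p(m := p (Suc k), Suc k := Suc k) \<in> E k
            \<and> (\<forall>j. m < j \<and> j < Suc k \<longrightarrow> p j < p (Suc k))"
proof -
  define q where "q = p(m := p (Suc k), Suc k := Suc k)"
  have q: "q permutes {1..k}" unfolding q_def using del_perm[OF p m pm] .
  have ip: "inj p" using permutes_inj[OF p] .
  have ge: "k \<le> inversions k q + num_cycles k q" using inv_cyc_ge[OF q] .
  have I: "inversions (Suc k) p = inversions k q + 1 + 2 * card {j. m < j \<and> j < Suc k \<and> p (Suc k) < p j}"
    unfolding q_def using del_inv[OF p m pm] .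
  have C: "num_cycles (Suc k) p = num_cycles k q" unfolding q_def using del_cyc[OF p m pm] by simp
  have fin: "finite {j. m < j \<and> j < Suc k \<and> p (Suc k) < p j}" by (rule finite_subset[of _ "{..<Suc k}"]) auto
  have G: "card {j. m < j \<and> j < Suc k \<and> p (Suc k) < p j} = 0 \<longleftrightarrow> (\<forall>j. m < j \<and> j < Suc k \<longrightarrow> p j < p (Suc k))"
  proof -
    have "card {j. m < j \<and> j < Suc k \<and> p (Suc k) < p j} = 0 \<longleftrightarrow> (\<forall>j. m < j \<and> j < Suc k \<longrightarrow> \<not> p (Suc k) < p j)"
      using fin by auto
    also have "\<dots> \<longleftrightarrow> (\<forall>j. m < j \<and> j < Suc k \<longrightarrow> p j < p (Suc k))"
    proof -
      have "m < j \<Longrightarrow> j < Suc k \<Longrightarrow> p j \<noteq> p (Suc k)" for j using inj_eq[OF ip, of j "Suc k"] by auto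
      then show ?thesis by (meson not_less_iff_gr_or_eq)
    qed
    finally show ?thesis .
  qed
  have "p \<in> E (Suc k) \<longleftrightarrow> inversions (Suc k) p + num_cycles (Suc k) p = Suc k"
    using p by (simp add: E_def)
  also have "\<dots> \<longleftrightarrow> inversions k q + num_cycles k q = k \<and> card {j. m < j \<and> j < Suc k \<and> p (Suc k) < p j} = 0"
  proof -
    define g where "g = card {j. m < j \<and> j < Suc k \<and> p (Suc k) < p j}"
    have "inversions (Suc k) p + num_cycles (Suc k) p = Suc k \<longleftrightarrow> inversions k q + num_cycles k q = k \<and> g = 0"
      using I C ge unfolding g_def[symmetric] by linarith
    then show ?thesis unfolding g_def .
  qed
  also have "\<dots> \<longleftrightarrow> q \<in> E k \<and> (\<forall>j. m < j \<and> j < Suc k \<longrightarrow> p j < p (Suc k))"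
    using q G by (simp add: E_def)
  finally show ?thesis unfolding q_def .
qed

lemma E_restrict: "{p \<in> E (Suc k). p (Suc k) = Suc k} = E k"
proof (rule set_eqI)
  fix p
  show "p \<in> {p \<in> E (Suc k). p (Suc k) = Suc k} \<longleftrightarrow> p \<in> E k"
  proof
    assume h: "p \<in> {p \<in> E (Suc k). p (Suc k) = Suc k}"
    then have pk: "p permutes {1..k}" using perm_restrict by (auto simp: E_def)
    then show "p \<in> E k" using h inv_restrict[OF pk] cyc_restrict[OF pk] by (simp add: E_def)
  next
    assume h: "p \<in> E k"
    then have pk: "p permutes {1..k}" by (simp add: E_def)
    then have "p permutes {1..Suc k} \<and> p (Suc k) = Suc k" using perm_restrict by blast
    then show "p \<in> {p \<in> E (Suc k). p (Suc k) = Suc k}"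
      using h inv_restrict[OF pk] cyc_restrict[OF pk] by (simp add: E_def)
  qed
qed



lemma perm_bound:
  assumes "(p::nat\<Rightarrow>nat) permutes {1..n}" "i \<in> {1..n}" shows "p i \<in> {1..n}"
  using permutes_in_image[OF assms(1)] assms(2) by simp

lemma RL:
  assumes q: "q \<in> E (Suc k)" and m: "m \<in> {1..k}"
    and rl: "\<forall>j. m < j \<and> j \<le> Suc k \<longrightarrow> q j < q m"
  shows "q m = Suc k"
proof -
  have qp: "q permutes {1..Suc k}" using q by (simp add: E_def)
  have mk: "m \<in> {1..Suc k}" "m < Suc k" using m by auto
  have qm: "q m \<le> Suc k" using perm_bound[OF qp mk(1)] by simp
  show ?thesis
  proof (cases "q (Suc k) = Suc k")
    case True
    have "q (Suc k) < q m" using spec[OF rl, of "Suc k"] mk(2) by simp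
    then show ?thesis using qm True by linarith
  next
    case False
    obtain m' where m': "m' \<in> {1..k}" "q m' = Suc k" using get_m[OF qp False] .
    have G: "\<forall>j. m' < j \<and> j < Suc k \<longrightarrow> q j < q (Suc k)" using iffD1[OF del_E[OF qp m'] q] by (rule conjunct2)
    have "\<not> m < m'"
    proof
      assume "m < m'"
      moreover have "m' \<le> Suc k" using m' by auto
      ultimately have "q m' < q m" using spec[OF rl, of m'] by simp
      then show False using qm m'(2) by linarith
    qed
    moreover have "\<not> m' < m"
    proof
      assume "m' < m"
      then have "q m < q (Suc k)" using spec[OF G, of m] mk(2) by simp
      moreover have "q (Suc k) < q m" using spec[OF rl, of "Suc k"] mk(2) by simp
      ultimately show False by simp
    qed
    ultimately have "m = m'" by linarith
    then show ?thesis using m' by simp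
  qed
qed

lemma E_avoids: "p \<in> E n \<Longrightarrow> avoids_321 n p"
proof (induction n arbitrary: p)
  case 0 then show ?case by (simp add: avoids_321_def)
next
  case (Suc k)
  have pp: "p permutes {1..Suc k}" using Suc.prems by (simp add: E_def)
  have bnd: "\<And>i. 1 \<le> i \<Longrightarrow> i \<le> Suc k \<Longrightarrow> p i \<le> Suc k" using perm_bound[OF pp] by auto
  show ?case
  proof (cases "p (Suc k) = Suc k")
    case True
    then have "p \<in> E k" using E_restrict[of k] Suc.prems by blast
    then have av: "avoids_321 k p" using Suc.IH by blast
    show ?thesis unfolding avoids_321_def
    proof
      assume "\<exists>i j l. 1 \<le> i \<and> i < j \<and> j < l \<and> l \<le> Suc k \<and> p j < p i \<and> p l < p j"
      then obtain i j l where h: "1 \<le> i" "i < j" "j < l" "l \<le> Suc k" "p j < p i" "p l < p j" by blast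
      show False
      proof (cases "l = Suc k")
        case True
        then show False using h bnd[of j] \<open>p (Suc k) = Suc k\<close> by auto
      next
        case False
        then show False using h av unfolding avoids_321_def by auto
      qed
    qed
  next
    case False
    obtain m where m: "m \<in> {1..k}" "p m = Suc k" using get_m[OF pp False] .
    define q where "q = p(m := p (Suc k), Suc k := Suc k)"
    have qE: "q \<in> E k" and G: "\<forall>j. m < j \<and> j < Suc k \<longrightarrow> p j < p (Suc k)"
      using del_E[OF pp m] Suc.prems unfolding q_def by blast+
    have av: "avoids_321 k q" using Suc.IH qE by blast
    have qv: "\<And>x. x \<noteq> m \<Longrightarrow> x \<noteq> Suc k \<Longrightarrow> q x = p x" by (simp add: q_def)
    have qmv: "q m = p (Suc k)" using m by (simp add: q_def)
    have nq: "\<And>i j l. 1 \<le> i \<Longrightarrow> i < j \<Longrightarrow> j < l \<Longrightarrow> l \<le> k \<Longrightarrow> q j < q i \<Longrightarrow> q l < q j \<Longrightarrow> False"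
      using av unfolding avoids_321_def by blast
    show ?thesis unfolding avoids_321_def
    proof
      assume "\<exists>i j l. 1 \<le> i \<and> i < j \<and> j < l \<and> l \<le> Suc k \<and> p j < p i \<and> p l < p j"
      then obtain i j l where h: "1 \<le> i" "i < j" "j < l" "l \<le> Suc k" "p j < p i" "p l < p j" by blast
      have pi: "p i \<le> Suc k" and pj: "p j \<le> Suc k" using bnd h by auto
      show False
      proof (cases "l = Suc k")
        case True
        show False
        proof (cases "j = m")
          case True then show False using h pi m by auto
        next
          case jm: False
          show False
          proof (cases "m < j")
            case True
            then show False using G h \<open>l = Suc k\<close> by auto
          next
            case False
            then have "j < m" using jm by auto
            then show False using nq[of i j m] h qv[of i] qv[of j] qmv \<open>l = Suc k\<close> m by auto
          qed
        qed
      next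
        case lk: False
        then have lk': "l \<le> k" using h by auto
        show False
        proof (cases "i = m")
          case True
          then have "p j < p (Suc k)" using G h lk' by auto
          then show False using nq[of m j l] h qv[of j] qv[of l] qmv True lk' m by auto
        next
          case im: False
          show False
          proof (cases "j = m \<or> l = m")
            case True then show False using h pi pj m by auto
          next
            case False
            then show False using nq[of i j l] h qv[of i] qv[of j] qv[of l] im lk' by auto
          qed
        qed
      qed
    qed
  qed
qed



lemma inv_rows:
  "inversions n p = (\<Sum>i\<in>{1..n}. card {j\<in>{1..n}. i < j \<and> p j < p i})"
proof -
  have e: "{(i, j). i \<in> {1..n} \<and> j \<in> {1..n} \<and> i < j \<and> p i > p j}
      = (SIGMA i:{1..n}. {j\<in>{1..n}. i < j \<and> p j < p i})" by (auto simp del: atLeastAtMost_iff)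
  have "inversions n p = card (SIGMA i:{1..n}. {j\<in>{1..n}. i < j \<and> p j < p i})"
    unfolding inversions_def e ..
  also have "\<dots> = (\<Sum>i\<in>{1..n}. card {j\<in>{1..n}. i < j \<and> p j < p i})"
    by (rule card_SigmaI) auto
  finally show ?thesis .
qed

lemma inv_cols:
  "inversions n p = (\<Sum>j\<in>{1..n}. card {i\<in>{1..n}. i < j \<and> p j < p i})"
proof -
  let ?S = "SIGMA j:{1..n}. {i\<in>{1..n}. i < j \<and> p j < p i}"
  have e: "{(i, j). i \<in> {1..n} \<and> j \<in> {1..n} \<and> i < j \<and> p i > p j}
      = (\<lambda>(a, b). (b, a)) ` ?S" by (auto simp del: atLeastAtMost_iff)
  have inj: "inj_on (\<lambda>(a, b). (b, a)) ?S" by (auto simp: inj_on_def)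
  have "inversions n p = card ?S"
    unfolding inversions_def e using card_image[OF inj] .
  also have "\<dots> = (\<Sum>j\<in>{1..n}. card {i\<in>{1..n}. i < j \<and> p j < p i})"
    by (rule card_SigmaI) auto
  finally show ?thesis .
qed

lemma disp_term:
  assumes p: "p permutes {1..n}" and av: "avoids_321 n p" and i: "i \<in> {1..n}"
  shows "\<bar>int (p i) - int i\<bar> = int (card {j\<in>{1..n}. j < i \<and> p i < p j} + card {j\<in>{1..n}. i < j \<and> p j < p i})"
proof -
  let ?P = "{1..n}"
  define L where "L = card {j\<in>?P. j < i \<and> p i < p j}"
  define R where "R = card {j\<in>?P. i < j \<and> p j < p i}"
  define c where "c = card {j\<in>?P. j < i \<and> p j < p i}"
  have ip: "inj p" using permutes_inj[OF p] .
  have pi: "p i \<in> ?P" using permutes_in_image[OF p] i by simp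
  have img: "p ` {j\<in>?P. p j < p i} = {1..<p i}"
  proof
    show "p ` {j\<in>?P. p j < p i} \<subseteq> {1..<p i}"
    proof
      fix x assume "x \<in> p ` {j\<in>?P. p j < p i}"
      then obtain j where j: "j \<in> ?P" "p j < p i" "x = p j" by blast
      have "p j \<in> ?P" using permutes_in_image[OF p] j(1) by simp
      then show "x \<in> {1..<p i}" using j by simp
    qed
  next
    show "{1..<p i} \<subseteq> p ` {j\<in>?P. p j < p i}"
    proof
      fix x assume x: "x \<in> {1..<p i}"
      then have xP: "x \<in> ?P" using pi by simp
      define y where "y = inv p x"
      have py: "p y = x" unfolding y_def using permutes_inverses(1)[OF p] by simp
      have "y \<in> ?P" unfolding y_def using permutes_in_image[OF permutes_inv[OF p]] xP by simp
      then have yA: "y \<in> {j\<in>?P. p j < p i}" using py x by simp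
      show "x \<in> p ` {j\<in>?P. p j < p i}" using image_eqI[of x p y, OF py[symmetric] yA] .
    qed
  qed
  have h1: "card {j\<in>?P. p j < p i} = p i - 1"
  proof -
    have "inj_on p {j\<in>?P. p j < p i}" using inj_on_subset[OF ip subset_UNIV] .
    then have "card {j\<in>?P. p j < p i} = card (p ` {j\<in>?P. p j < p i})" by (simp add: card_image)
    then show ?thesis using img by simp
  qed
  have h2: "card {j\<in>?P. j < i} = i - 1"
  proof -
    have "{j\<in>?P. j < i} = {1..<i}" using i by (auto simp del: atLeastAtMost_iff simp: atLeastAtMost_iff)
    then show ?thesis by simp
  qed
  have s1: "{j\<in>?P. p j < p i} = {j\<in>?P. j < i \<and> p j < p i} \<union> {j\<in>?P. i < j \<and> p j < p i}"
  proof (rule set_eqI)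
    fix x show "x \<in> {j\<in>?P. p j < p i} \<longleftrightarrow> x \<in> {j\<in>?P. j < i \<and> p j < p i} \<union> {j\<in>?P. i < j \<and> p j < p i}"
      using less_linear[of x i] by auto
  qed
  have s1c: "card {j\<in>?P. p j < p i} = c + R" unfolding c_def R_def s1
    by (rule card_Un_disjoint) auto
  have s2: "{j\<in>?P. j < i} = {j\<in>?P. j < i \<and> p j < p i} \<union> {j\<in>?P. j < i \<and> p i < p j}"
  proof (rule set_eqI)
    fix x
    have "x < i \<Longrightarrow> p x \<noteq> p i" using inj_eq[OF ip, of x i] by auto
    then show "x \<in> {j\<in>?P. j < i} \<longleftrightarrow> x \<in> {j\<in>?P. j < i \<and> p j < p i} \<union> {j\<in>?P. j < i \<and> p i < p j}"
      using less_linear[of "p x" "p i"] by auto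
  qed
  have s2c: "card {j\<in>?P. j < i} = c + L" unfolding c_def L_def s2
    by (rule card_Un_disjoint) auto
  have LR: "L = 0 \<or> R = 0"
  proof (rule ccontr)
    assume "\<not> (L = 0 \<or> R = 0)"
    then have "L > 0" "R > 0" by auto
    then obtain j l where j: "j \<in> ?P" "j < i" "p i < p j" and l: "l \<in> ?P" "i < l" "p l < p i"
      unfolding L_def R_def by (auto simp: card_gt_0_iff simp del: atLeastAtMost_iff)
    have "1 \<le> j \<and> j < i \<and> i < l \<and> l \<le> n \<and> p i < p j \<and> p l < p i" using j l by simp
    then show False using av unfolding avoids_321_def by blast
  qed
  have pi1: "1 \<le> p i" and i1: "1 \<le> i" using pi i by auto
  have e1: "p i - 1 = c + R" using h1 s1c by simp
  have e2: "i - 1 = c + L" using h2 s2c by simp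
  have "\<bar>int (p i) - int i\<bar> = int (L + R)"
    using LR e1 e2 pi1 i1 by auto
  then show ?thesis unfolding L_def R_def .
qed

lemma disp_eq:
  assumes p: "p permutes {1..n}" and av: "avoids_321 n p"
  shows "total_displacement n p = 2 * int (inversions n p)"
proof -
  have "total_displacement n p = (\<Sum>i\<in>{1..n}. int (card {j\<in>{1..n}. j < i \<and> p i < p j} + card {j\<in>{1..n}. i < j \<and> p j < p i}))"
    unfolding total_displacement_def by (rule sum.cong[OF refl], rule disp_term[OF p av])
  also have "\<dots> = int ((\<Sum>i\<in>{1..n}. card {j\<in>{1..n}. j < i \<and> p i < p j}) + (\<Sum>i\<in>{1..n}. card {j\<in>{1..n}. i < j \<and> p j < p i}))"
    by (simp add: sum.distrib)
  also have "\<dots> = int (inversions n p + inversions n p)"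
    using inv_rows[of n p] inv_cols[of n p] by simp
  finally show ?thesis by simp
qed

lemma cyc_le: "num_cycles n p \<le> n"
  unfolding num_cycles_def using card_image_le[of "{1..n}" "orbit p"] by simp

lemma S_eq: "{p. p permutes {1..n} \<and> shallow n p \<and> avoids_321 n p} = E n"
proof (rule set_eqI)
  fix p
  show "p \<in> {p. p permutes {1..n} \<and> shallow n p \<and> avoids_321 n p} \<longleftrightarrow> p \<in> E n"
  proof
    assume h: "p \<in> {p. p permutes {1..n} \<and> shallow n p \<and> avoids_321 n p}"
    then have p: "p permutes {1..n}" and sh: "shallow n p" and av: "avoids_321 n p" by auto
    have "int (inversions n p) + int (n - num_cycles n p) = 2 * int (inversions n p)"
      using sh disp_eq[OF p av] unfolding shallow_def reflection_length_def by simp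
    then have "inversions n p + num_cycles n p = n" using cyc_le[of n p] by linarith
    then show "p \<in> E n" using p by (simp add: E_def)
  next
    assume h: "p \<in> E n"
    then have p: "p permutes {1..n}" and eq: "inversions n p + num_cycles n p = n" by (auto simp: E_def)
    have av: "avoids_321 n p" using E_avoids[OF h] .
    have "shallow n p"
      unfolding shallow_def reflection_length_def disp_eq[OF p av] using eq by linarith
    then show "p \<in> {p. p permutes {1..n} \<and> shallow n p \<and> avoids_321 n p}" using p av by simp
  qed
qed



definition ins :: "nat \<Rightarrow> (nat \<Rightarrow> nat) \<Rightarrow> nat \<Rightarrow> (nat \<Rightarrow> nat)" where
  "ins K q m = q(m := Suc K, Suc K := q m)"

definition del :: "nat \<Rightarrow> (nat \<Rightarrow> nat) \<Rightarrow> nat \<Rightarrow> (nat \<Rightarrow> nat)" where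
  "del K p m = p(m := p (Suc K), Suc K := Suc K)"

lemma E_fin: "finite (E n)"
proof (rule finite_subset)
  show "E n \<subseteq> {p. p permutes {1..n}}" by (auto simp: E_def)
  show "finite {p. p permutes {1..n}}" by (rule finite_permutations) simp
qed

lemma ins_del:
  assumes q: "q permutes {1..K}" and m: "m \<in> {1..K}"
  shows "del K (ins K q m) m = q"
proof
  fix x
  have qK: "q (Suc K) = Suc K" using permutes_not_in[OF q] by simp
  have mK: "m \<noteq> Suc K" using m by auto
  show "del K (ins K q m) m x = q x"
    using qK mK by (cases "x = m"; cases "x = Suc K") (simp_all add: del_def ins_def)
qed

lemma del_ins:
  assumes m: "m \<in> {1..K}" and pm: "p m = Suc K"
  shows "ins K (del K p m) m = p"
proof
  fix x
  have mK: "m \<noteq> Suc K" using m by auto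
  show "ins K (del K p m) m x = p x"
    using pm mK by (cases "x = m"; cases "x = Suc K") (simp_all add: del_def ins_def)
qed

lemma ins_inj:
  assumes q: "q permutes {1..K}" and m: "m \<in> {1..K}"
    and q': "q' permutes {1..K}" and m': "m' \<in> {1..K}"
    and e: "ins K q m = ins K q' m'"
  shows "q = q'"
proof -
  have pp: "ins K q m permutes {1..Suc K}" using ins_perm[OF q m] by (simp add: ins_def)
  have "ins K q m m = Suc K" "ins K q' m' m' = Suc K" using m m' by (auto simp: ins_def)
  then have "ins K q m m = ins K q m m'" using e by simp
  then have "m = m'" using inj_eq[OF permutes_inj[OF pp]] by simp
  then show ?thesis using ins_del[OF q m] ins_del[OF q' m'] e by metis
qed

lemma E_perm: "p \<in> E n \<Longrightarrow> p permutes {1..n}" by (simp add: E_def)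

lemma B_eq:
  "{p \<in> E (Suc (Suc k)). p (Suc (Suc k)) \<noteq> Suc (Suc k) \<and> p (Suc k) = Suc (Suc k)}
     = (\<lambda>q. ins (Suc k) q (Suc k)) ` E (Suc k)"
proof (rule set_eqI, rule iffI)
  let ?n = "Suc (Suc k)" and ?n' = "Suc k"
  have mn: "?n' \<in> {1..?n'}" by simp
  fix p
  assume "p \<in> {p \<in> E ?n. p ?n \<noteq> ?n \<and> p ?n' = ?n}"
  then have pE: "p \<in> E ?n" and pn: "p ?n' = ?n" by auto
  have pp: "p permutes {1..?n}" using E_perm[OF pE] .
  have "del ?n' p ?n' \<in> E ?n'" using del_E[OF pp mn pn] pE unfolding del_def by blast
  moreover have "p = ins ?n' (del ?n' p ?n') ?n'" using del_ins[where m="?n'" and K="?n'" and p=p, OF mn pn] by simp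
  ultimately show "p \<in> (\<lambda>q. ins ?n' q ?n') ` E ?n'" by blast
next
  let ?n = "Suc (Suc k)" and ?n' = "Suc k"
  have mn: "?n' \<in> {1..?n'}" by simp
  fix p
  assume "p \<in> (\<lambda>q. ins ?n' q ?n') ` E ?n'"
  then obtain q where qE: "q \<in> E ?n'" and pq: "p = ins ?n' q ?n'" by blast
  have qp: "q permutes {1..?n'}" using E_perm[OF qE] .
  have pp: "p permutes {1..?n}" unfolding pq ins_def using ins_perm[OF qp mn] .
  have pn: "p ?n' = ?n" unfolding pq ins_def by simp
  have "del ?n' p ?n' = q" unfolding pq using ins_del[OF qp mn] .
  then have "p \<in> E ?n" using del_E[OF pp mn pn] qE unfolding del_def by simp
  moreover have "p ?n \<noteq> ?n"
  proof -
    have "q ?n' \<in> {1..?n'}" using perm_bound[OF qp mn] .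
    then show ?thesis unfolding pq ins_def by simp
  qed
  ultimately show "p \<in> {p \<in> E ?n. p ?n \<noteq> ?n \<and> p ?n' = ?n}" using pn by simp
qed

lemma E_sub: "E k \<subseteq> E (Suc k)"
  using E_restrict[of k] by blast

lemma C_eq:
  "{p \<in> E (Suc (Suc k)). p (Suc (Suc k)) \<noteq> Suc (Suc k) \<and> p (Suc k) \<noteq> Suc (Suc k)}
     = (\<lambda>q. ins (Suc k) q (inv q (Suc k))) ` (E (Suc k) - E k)"
proof (rule set_eqI, rule iffI)
  let ?n = "Suc (Suc k)" and ?n' = "Suc k"
  fix p
  assume "p \<in> {p \<in> E ?n. p ?n \<noteq> ?n \<and> p ?n' \<noteq> ?n}"
  then have pE: "p \<in> E ?n" and pn: "p ?n \<noteq> ?n" and pn': "p ?n' \<noteq> ?n" by auto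
  have pp: "p permutes {1..?n}" using E_perm[OF pE] .
  obtain m where m: "m \<in> {1..?n'}" "p m = ?n" using get_m[OF pp pn] .
  define q where "q = del ?n' p m"
  have qE: "q \<in> E ?n'" and G: "\<forall>j. m < j \<and> j < ?n \<longrightarrow> p j < p ?n"
    using del_E[OF pp m] pE unfolding q_def del_def by blast+
  have qp: "q permutes {1..?n'}" using E_perm[OF qE] .
  have "m \<noteq> ?n'" using m(2) pn' by auto
  then have mk: "m \<in> {1..k}" using m(1) by auto
  have "\<forall>j. m < j \<and> j \<le> ?n' \<longrightarrow> q j < q m"
  proof (intro allI impI)
    fix j assume j: "m < j \<and> j \<le> ?n'"
    then have "q j = p j" "q m = p ?n" unfolding q_def del_def by auto
    then show "q j < q m" using G j by auto
  qed
  then have qm: "q m = ?n'" using RL[OF qE mk] by blast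
  have "q \<notin> E k"
  proof
    assume "q \<in> E k"
    then have "q ?n' = ?n'" using E_restrict[of k] by blast
    then have "q ?n' = q m" using qm by simp
    then show False using inj_eq[OF permutes_inj[OF qp]] mk by auto
  qed
  moreover have "inv q ?n' = m" using permutes_inv_eq[OF qp] qm by simp
  moreover have "p = ins ?n' q m" using del_ins[where m=m and K="?n'" and p=p, OF m(1) m(2)] unfolding q_def by simp
  ultimately show "p \<in> (\<lambda>q. ins ?n' q (inv q ?n')) ` (E ?n' - E k)" using qE by force
next
  let ?n = "Suc (Suc k)" and ?n' = "Suc k"
  fix p
  assume "p \<in> (\<lambda>q. ins ?n' q (inv q ?n')) ` (E ?n' - E k)"
  then obtain q where qE: "q \<in> E ?n'" and qk: "q \<notin> E k" and pq: "p = ins ?n' q (inv q ?n')" by blast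
  have qp: "q permutes {1..?n'}" using E_perm[OF qE] .
  define m where "m = inv q ?n'"
  have qm: "q m = ?n'" unfolding m_def using permutes_inverses(1)[OF qp] by simp
  have m: "m \<in> {1..?n'}" unfolding m_def using permutes_in_image[OF permutes_inv[OF qp]] by simp
  have qn': "q ?n' \<noteq> ?n'"
  proof
    assume "q ?n' = ?n'"
    then have "q \<in> E k" using E_restrict[of k] qE by blast
    then show False using qk by simp
  qed
  have mn': "m \<noteq> ?n'" using qm qn' by auto
  have pq': "p = ins ?n' q m" unfolding pq m_def ..
  have pp: "p permutes {1..?n}" unfolding pq' ins_def using ins_perm[OF qp m] .
  have pm: "p m = ?n" unfolding pq' ins_def using m by auto
  have pN: "p ?n = ?n'" unfolding pq' ins_def using qm by simp
  have "del ?n' p m = q" unfolding pq' using ins_del[OF qp m] .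
  moreover have "\<forall>j. m < j \<and> j < ?n \<longrightarrow> p j < p ?n"
  proof (intro allI impI)
    fix j assume j: "m < j \<and> j < ?n"
    then have pj: "p j = q j" unfolding pq' ins_def by auto
    have jr: "j \<in> {1..?n'}" using j by auto
    have "q j \<in> {1..?n'}" using perm_bound[OF qp jr] .
    moreover have "q j \<noteq> q m" using inj_eq[OF permutes_inj[OF qp], of j m] j by auto
    ultimately show "p j < p ?n" using pj pN qm by auto
  qed
  ultimately have "p \<in> E ?n" using del_E[OF pp m pm] qE unfolding del_def by simp
  moreover have "p ?n' \<noteq> ?n"
  proof -
    have "p ?n' = q ?n'" unfolding pq' ins_def using mn' by simp
    moreover have "q ?n' \<in> {1..?n'}" using perm_bound[OF qp] by simp
    ultimately show ?thesis by simp
  qed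
  ultimately show "p \<in> {p \<in> E ?n. p ?n \<noteq> ?n \<and> p ?n' \<noteq> ?n}" using pN by simp
qed

lemma E_rec: "card (E (Suc (Suc k))) + card (E k) = 3 * card (E (Suc k))"
proof -
  let ?n = "Suc (Suc k)" and ?n' = "Suc k"
  define A where "A = {p \<in> E ?n. p ?n = ?n}"
  define B where "B = {p \<in> E ?n. p ?n \<noteq> ?n \<and> p ?n' = ?n}"
  define C where "C = {p \<in> E ?n. p ?n \<noteq> ?n \<and> p ?n' \<noteq> ?n}"
  have U: "E ?n = A \<union> (B \<union> C)" unfolding A_def B_def C_def by auto
  have fA: "finite A" "finite B" "finite C" unfolding A_def B_def C_def using E_fin[of ?n] by auto
  have cE: "card (E ?n) = card A + (card B + card C)"
    unfolding U using fA
    by (simp add: card_Un_disjoint A_def B_def C_def disjoint_iff)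
  have cA: "card A = card (E ?n')" unfolding A_def using E_restrict[of ?n'] by simp
  have cB: "card B = card (E ?n')"
  proof -
    have "inj_on (\<lambda>q. ins ?n' q ?n') (E ?n')"
    proof (rule inj_onI)
      fix q q' assume "q \<in> E ?n'" "q' \<in> E ?n'" "ins ?n' q ?n' = ins ?n' q' ?n'"
      then show "q = q'" using ins_inj[of q ?n' ?n' q' ?n'] E_perm by simp
    qed
    then show ?thesis unfolding B_def B_eq by (rule card_image)
  qed
  have cC: "card C = card (E ?n') - card (E k)"
  proof -
    have "inj_on (\<lambda>q. ins ?n' q (inv q ?n')) (E ?n' - E k)"
    proof (rule inj_onI)
      fix q q' assume h: "q \<in> E ?n' - E k" "q' \<in> E ?n' - E k"
        "ins ?n' q (inv q ?n') = ins ?n' q' (inv q' ?n')"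
      have qp: "q permutes {1..?n'}" "q' permutes {1..?n'}" using h E_perm by auto
      have "inv q ?n' \<in> {1..?n'}" "inv q' ?n' \<in> {1..?n'}"
        using permutes_in_image[OF permutes_inv[OF qp(1)]] permutes_in_image[OF permutes_inv[OF qp(2)]] by auto
      then show "q = q'" using ins_inj[OF qp(1) _ qp(2) _ h(3)] by simp
    qed
    then have "card C = card (E ?n' - E k)" unfolding C_def C_eq by (rule card_image)
    also have "\<dots> = card (E ?n') - card (E k)" using card_Diff_subset[OF E_fin E_sub] .
    finally show ?thesis .
  qed
  have le: "card (E k) \<le> card (E ?n')" using card_mono[OF E_fin E_sub] .
  show ?thesis using cE cA cB cC le by linarith
qed

lemma E0: "card (E 0) = 1"
proof -
  have "E 0 = {id}"
  proof (rule set_eqI)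
    fix p
    show "p \<in> E 0 \<longleftrightarrow> p \<in> {id}"
      by (simp add: E_def inversions_def num_cycles_def)
  qed
  then show ?thesis by simp
qed

lemma E1: "card (E (Suc 0)) = 1"
proof -
  have "E (Suc 0) = {p \<in> E (Suc 0). p (Suc 0) = Suc 0}"
  proof (rule set_eqI)
    fix p
    show "p \<in> E (Suc 0) \<longleftrightarrow> p \<in> {p \<in> E (Suc 0). p (Suc 0) = Suc 0}"
    proof
      assume "p \<in> E (Suc 0)"
      then have "p permutes {Suc 0}" using E_perm by fastforce
      then have "p = id" by simp
      then show "p \<in> {p \<in> E (Suc 0). p (Suc 0) = Suc 0}" using \<open>p \<in> E (Suc 0)\<close> by simp
    qed simp
  qed
  then have "E (Suc 0) = E 0" using E_restrict[of 0] by simp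
  then show ?thesis using E0 by simp
qed

lemma fib_id: "fib (Suc (Suc (Suc (Suc x)))) + fib x = 3 * fib (Suc (Suc x))"
proof -
  have a: "fib (Suc (Suc x)) = fib (Suc x) + fib x" by simp
  have b: "fib (Suc (Suc (Suc x))) = fib (Suc (Suc x)) + fib (Suc x)" by simp
  have c: "fib (Suc (Suc (Suc (Suc x)))) = fib (Suc (Suc (Suc x))) + fib (Suc (Suc x))" by simp
  show ?thesis using a b c by linarith
qed

lemma card_E_fib: "card (E (Suc n)) = fib (2 * n + 1) \<and> card (E (Suc (Suc n))) = fib (2 * n + 3)"
proof (induction n)
  case 0
  have "card (E (Suc (Suc 0))) + card (E 0) = 3 * card (E (Suc 0))" using E_rec[of 0] .
  then have c2: "card (E (Suc (Suc 0))) = 2" using E0 E1 by simp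
  have f3: "fib (2 * 0 + 3) = 2" by (simp add: numeral_3_eq_3)
  have f1: "fib (2 * 0 + 1) = 1" by simp
  show ?case using E1 c2 f3 f1 by simp
next
  case (Suc n)
  have r: "card (E (Suc (Suc (Suc n)))) + card (E (Suc n)) = 3 * card (E (Suc (Suc n)))" using E_rec[of "Suc n"] .
  have f: "fib (Suc (Suc (Suc (Suc (2 * n + 1))))) + fib (2 * n + 1) = 3 * fib (Suc (Suc (2 * n + 1)))" using fib_id .
  have e1: "2 * Suc n + 1 = Suc (Suc (2 * n + 1))" "2 * n + 3 = Suc (Suc (2 * n + 1))"
    "2 * Suc n + 3 = Suc (Suc (Suc (Suc (2 * n + 1))))" by simp_all
  have i1: "card (E (Suc n)) = fib (2 * n + 1)" and i2: "card (E (Suc (Suc n))) = fib (Suc (Suc (2 * n + 1)))"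
    using Suc.IH e1(2) by auto
  have "card (E (Suc (Suc (Suc n)))) = fib (Suc (Suc (Suc (Suc (2 * n + 1)))))"
    using r f i1 i2 by linarith
  then show ?case unfolding e1(1) e1(3) using i2 by blast
qed


theorem theorem6p1:
  fixes n :: nat
  assumes "n \<ge> 1"
  shows "card {p. p permutes {1..n} \<and> shallow n p \<and> avoids_321 n p} = fib (2 * n - 1)"
proof -
  obtain n0 where n0: "n = Suc n0" using assms by (cases n) auto
  then have e: "2 * n - 1 = 2 * n0 + 1" by simp
  have "card {p. p permutes {1..n} \<and> shallow n p \<and> avoids_321 n p} = card (E n)"
    using S_eq[of n] by simp
  also have "\<dots> = fib (2 * n0 + 1)" using card_E_fib[of n0] n0 by simp
  finally show ?thesis using e by simp
qed

end
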